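(* Assume the setting and notation in the context, and suppose the selection threshold is exchangeable: $\hat\tau=\tau(T_i: i\in\mathcal C\cup\mathcal U)$ for a deterministic measurable function $\tau:\mathbb R^{n+m}\to\mathbb R$ that is invariant under all permutations of its $n+m$ arguments. Let $\hat{\mathcal S}_u=\{i\in\mathcal U: T_i\le\hat\tau\}$, $\hat{\mathcal S}_c=\{i\in\mathcal C: T_i\le\hat\tau\}$, and for $j\in\hat{\mathcal S}_u$ let $\mathrm{PI}^{\mathrm{SCOP}}_j=\big[\hat\mu(X_j)-Q_\alpha(\{R_i\}_{i\in\hat{\mathcal S}_c}),\ \hat\mu(X_j)+Q_\alpha(\{R_i\}_{i\in\hat{\mathcal S}_c})\big]$. Then: (i) for every $j\in\mathcal U$ with $\mathbb P(j\in\hat{\mathcal S}_u)>0$, $\mathbb P\big(Y_j\notin \mathrm{PI}^{\mathrm{SCOP}}_j\mid j\in\hat{\mathcal S}_u\big)\le\alpha$; (ii) $\mathrm{FCR}\le\alpha$ for these intervals; (iii) if moreover the residuals $\{R_i\}_{i\in\mathcal C\cup\mathcal U}$ are almost surely pairwise distinct and $\mathbb P(|\hat{\mathcal S}_u|>0)=1$, then $\mathrm{FCR}\ge\alpha-\mathbb E\big[(|\hat{\mathcal S}_c|+1)^{-1}\big]$.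
   Context: Setting: $\hat\mu:\mathbb R^d\to\mathbb R$ (prediction model) and $g:\mathbb R^d\to\mathbb R$ (selection score) are fixed deterministic measurable functions (obtained from a training set that is treated as fixed). The calibration indices form a set $\mathcal C$ with $|\mathcal C|=n$ and the test indices a disjoint set $\mathcal U$ with $|\mathcal U|=m$. The pairs $(X_i,Y_i)\in\mathbb R^d\times\mathbb R$, $i\in\mathcal C\cup\mathcal U$, are independent and identically distributed; test labels are unobserved by the procedure. Define scores $T_i=g(X_i)$ and residuals $R_i=|Y_i-\hat\mu(X_i)|$. Fix $\alpha\in(0,1)$. For a finite index set $S$, $Q_\alpha(\{R_i\}_{i\in S})$ denotes the $\lceil(1-\alpha)(|S|+1)\rceil$-th smallest value of $\{R_i\}_{i\in S}$, with the convention that it equals $+\infty$ if $\lceil(1-\alpha)(|S|+1)\rceil>|S|$ (in particular if $S=\emptyset$). For a selected test set $\hat{\mathcal S}_u$ with intervals $\mathrm{PI}_j$, $j\in\hat{\mathcal S}_u$, the false coverage-statement rate is $\mathrm{FCR}=\mathbb E\Big[\frac{|\{j\in\hat{\mathcal S}_u: Y_j\notin\mathrm{PI}_j\}|}{\max\{|\hat{\mathcal S}_u|,1\}}\Big]$. *)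

theory Defs
  imports "HOL-Probability.Probability" "HOL-Library.Multiset"
begin

text \<open>Conformal quantile Q_alpha of the values R i, i in S: the
  ceil((1-alpha)(|S|+1))-th smallest value (with multiplicity), or +infinity if
  that rank exceeds |S| (in particular if S is empty).\<close>
definition conf_quantile :: "real \<Rightarrow> 'i set \<Rightarrow> ('i \<Rightarrow> real) \<Rightarrow> ereal" where
  "conf_quantile \<alpha> S R =
     (let k = nat \<lceil>(1 - \<alpha>) * (real (card S) + 1)\<rceil> in
      if k > card S then \<infinity>
      else ereal (sorted_list_of_multiset (image_mset R (mset_set S)) ! (k - 1)))"

text \<open>Selection threshold tau_hat = tau(T_i : i in C u U), with T_i = g(X_i).
  tau is a function of the vector (T_i)_{i in C u U}, represented as an
  extensional function on C u U.\<close>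
definition tau_hat ::
  "(('i \<Rightarrow> real) \<Rightarrow> real) \<Rightarrow> ('x \<Rightarrow> real) \<Rightarrow> 'i set \<Rightarrow> 'i set \<Rightarrow> ('i \<Rightarrow> 'w \<Rightarrow> 'x) \<Rightarrow> 'w \<Rightarrow> real" where
  "tau_hat \<tau> g C U X \<omega> = \<tau> (restrict (\<lambda>i. g (X i \<omega>)) (C \<union> U))"

definition selected ::
  "(('i \<Rightarrow> real) \<Rightarrow> real) \<Rightarrow> ('x \<Rightarrow> real) \<Rightarrow> 'i set \<Rightarrow> 'i set \<Rightarrow> ('i \<Rightarrow> 'w \<Rightarrow> 'x) \<Rightarrow> 'i set \<Rightarrow> 'w \<Rightarrow> 'i set" where
  "selected \<tau> g C U X A \<omega> = {i \<in> A. g (X i \<omega>) \<le> tau_hat \<tau> g C U X \<omega>}"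

definition scop_miss ::
  "real \<Rightarrow> ('x \<Rightarrow> real) \<Rightarrow> (('i \<Rightarrow> real) \<Rightarrow> real) \<Rightarrow> ('x \<Rightarrow> real) \<Rightarrow> 'i set \<Rightarrow> 'i set
    \<Rightarrow> ('i \<Rightarrow> 'w \<Rightarrow> 'x) \<Rightarrow> ('i \<Rightarrow> 'w \<Rightarrow> real) \<Rightarrow> 'i \<Rightarrow> 'w \<Rightarrow> bool" where
  "scop_miss \<alpha> \<mu> \<tau> g C U X Y j \<omega> =
     (let q = conf_quantile \<alpha> (selected \<tau> g C U X C \<omega>) (\<lambda>i. \<bar>Y i \<omega> - \<mu> (X i \<omega>)\<bar>)
      in \<not> (ereal (\<mu> (X j \<omega>)) - q \<le> ereal (Y j \<omega>) \<and> ereal (Y j \<omega>) \<le> ereal (\<mu> (X j \<omega>)) + q))"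

definition scop_FCR ::
  "'w measure \<Rightarrow> real \<Rightarrow> ('x \<Rightarrow> real) \<Rightarrow> (('i \<Rightarrow> real) \<Rightarrow> real) \<Rightarrow> ('x \<Rightarrow> real) \<Rightarrow> 'i set \<Rightarrow> 'i set
    \<Rightarrow> ('i \<Rightarrow> 'w \<Rightarrow> 'x) \<Rightarrow> ('i \<Rightarrow> 'w \<Rightarrow> real) \<Rightarrow> real" where
  "scop_FCR M \<alpha> \<mu> \<tau> g C U X Y =
     (\<integral>\<omega>. real (card {j \<in> selected \<tau> g C U X U \<omega>. scop_miss \<alpha> \<mu> \<tau> g C U X Y j \<omega>})
            / real (max (card (selected \<tau> g C U X U \<omega>)) 1) \<partial>M)"

end

theory Submission
  imports Defs
begin




lemma rank_upper:
  fixes r :: "'a \<Rightarrow> real"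
  assumes S: "finite S"
  shows "card {i\<in>S. k \<le> card {l\<in>S. r l < r i}} \<le> card S - k"
proof (cases "{i\<in>S. k \<le> card {l\<in>S. r l < r i}} = {}")
  case True then show ?thesis by (simp only: card.empty)
next
  case False
  define W where "W = {i\<in>S. k \<le> card {l\<in>S. r l < r i}}"
  have Wne: "W \<noteq> {}" and finW: "finite W" using False S by (auto simp: W_def)
  obtain i where iW: "i \<in> W" and imin: "\<And>l. l \<in> W \<Longrightarrow> r i \<le> r l"
  proof -
    have "Min (r ` W) \<in> r ` W" using finW Wne by (intro Min_in) auto
    then obtain i where "i \<in> W" "r i = Min (r ` W)" by auto
    moreover have "\<And>l. l \<in> W \<Longrightarrow> Min (r ` W) \<le> r l" using finW by (intro Min_le) auto
    ultimately show ?thesis using that by auto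
  qed
  have sub: "{l\<in>S. r l < r i} \<subseteq> S - W" using imin by fastforce
  have WS: "W \<subseteq> S" by (auto simp: W_def)
  have "k \<le> card {l\<in>S. r l < r i}" using iW by (simp add: W_def)
  also have "\<dots> \<le> card (S - W)" using sub S by (intro card_mono) auto
  also have "\<dots> = card S - card W" using WS finW by (simp add: card_Diff_subset)
  finally have "k \<le> card S - card W" .
  moreover have "card W \<le> card S" using WS S by (simp add: card_mono)
  ultimately show ?thesis unfolding W_def[symmetric] by linarith
qed

lemma rank_exact:
  fixes r :: "'a \<Rightarrow> real"
  assumes S: "finite S" and inj: "inj_on r S" and k: "k \<le> card S"
  shows "card {i\<in>S. k \<le> card {l\<in>S. r l < r i}} = card S - k"
proof -
  define rk where "rk i = card {l\<in>S. r l < r i}" for i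
  have mono: "rk a < rk b" if "a \<in> S" "b \<in> S" "r a < r b" for a b
  proof -
    have "{l\<in>S. r l < r a} \<subset> {l\<in>S. r l < r b}" using that by auto
    then show ?thesis unfolding rk_def using S by (intro psubset_card_mono) auto
  qed
  have injrk: "inj_on rk S"
  proof (rule inj_onI)
    fix a b assume ab: "a \<in> S" "b \<in> S" "rk a = rk b"
    show "a = b"
    proof (rule ccontr)
      assume "a \<noteq> b"
      then have "r a \<noteq> r b" using inj ab by (meson inj_onD)
      then show False using mono[of a b] mono[of b a] ab by linarith
    qed
  qed
  have lt: "rk i < card S" if "i \<in> S" for i
  proof -
    have "{l\<in>S. r l < r i} \<subset> S" using that by auto
    then show ?thesis unfolding rk_def using S by (intro psubset_card_mono) auto
  qed
  have img: "rk ` S = {..<card S}"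
  proof (rule card_subset_eq)
    show "rk ` S \<subseteq> {..<card S}" using lt by auto
    show "card (rk ` S) = card {..<card S}" using card_image[OF injrk] by simp
  qed simp
  have "{i\<in>S. k \<le> rk i} = {i\<in>S. rk i \<in> {k..<card S}}" using lt by auto
  have "card {i\<in>S. k \<le> rk i} = card (rk ` {i\<in>S. k \<le> rk i})"
    by (rule card_image[symmetric]) (rule inj_on_subset[OF injrk], auto)
  also have "rk ` {i\<in>S. k \<le> rk i} = {k..<card S}"
  proof
    show "rk ` {i\<in>S. k \<le> rk i} \<subseteq> {k..<card S}" using lt by auto
    show "{k..<card S} \<subseteq> rk ` {i\<in>S. k \<le> rk i}"
    proof
      fix x assume x: "x \<in> {k..<card S}"
      then have "x \<in> rk ` S" using img by auto
      then obtain i where "i \<in> S" "x = rk i" by auto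
      then show "x \<in> rk ` {i\<in>S. k \<le> rk i}" using x by auto
    qed
  qed
  finally show ?thesis by (simp add: rk_def)
qed



lemma sorted_nth_less_iff:
  fixes xs :: "real list"
  assumes s: "sorted xs" and k: "1 \<le> k" "k \<le> length xs"
  shows "(xs!(k-1) < v) \<longleftrightarrow> k \<le> length (filter (\<lambda>x. x < v) xs)"
proof
  assume a: "xs!(k-1) < v"
  have "{..<k} \<subseteq> {i. i < length xs \<and> xs!i < v}"
  proof
    fix i assume "i \<in> {..<k}"
    then have "i \<le> k - 1" "i < length xs" using k by auto
    then have "xs!i \<le> xs!(k-1)" using s k by (intro sorted_nth_mono) auto
    then show "i \<in> {i. i < length xs \<and> xs!i < v}" using a \<open>i < length xs\<close> by auto
  qed
  then have "card {..<k} \<le> card {i. i < length xs \<and> xs!i < v}" by (intro card_mono) auto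
  then show "k \<le> length (filter (\<lambda>x. x < v) xs)" by (simp add: length_filter_conv_card)
next
  assume a: "k \<le> length (filter (\<lambda>x. x < v) xs)"
  show "xs!(k-1) < v"
  proof (rule ccontr)
    assume "\<not> xs!(k-1) < v"
    then have b: "v \<le> xs!(k-1)" by simp
    have "{i. i < length xs \<and> xs!i < v} \<subseteq> {..<k-1}"
    proof
      fix i assume i: "i \<in> {i. i < length xs \<and> xs!i < v}"
      show "i \<in> {..<k-1}"
      proof (rule ccontr)
        assume "i \<notin> {..<k-1}"
        then have "xs!(k-1) \<le> xs!i" using s i by (intro sorted_nth_mono) auto
        then show False using i b by auto
      qed
    qed
    then have "card {i. i < length xs \<and> xs!i < v} \<le> card {..<k-1}" by (intro card_mono) auto
    then show False using a k by (simp add: length_filter_conv_card)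
  qed
qed

lemma conf_quantile_less:
  fixes R :: "'i \<Rightarrow> real"
  assumes S: "finite S" and al: "0 < \<alpha>" "\<alpha> < 1"
  shows "(ereal v > conf_quantile \<alpha> S R) \<longleftrightarrow>
    ((1-\<alpha>)*(real (card S)+1) \<le> real (card S) \<and> (1-\<alpha>)*(real (card S)+1) \<le> real (card {i\<in>S. R i < v}))"
proof -
  define k where "k = nat \<lceil>(1 - \<alpha>) * (real (card S) + 1)\<rceil>"
  have pos: "0 < (1-\<alpha>)*(real (card S)+1)" using al by simp
  have k1: "1 \<le> k" unfolding k_def using pos by linarith
  have kle: "k \<le> m \<longleftrightarrow> (1-\<alpha>)*(real (card S)+1) \<le> real m" for m
    unfolding k_def by (rule nat_ceiling_le_eq)
  show ?thesis
  proof (cases "k > card S")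
    case True
    then show ?thesis using kle[of "card S"] by (simp add: conf_quantile_def k_def[symmetric])
  next
    case False
    define xs where "xs = sorted_list_of_multiset (image_mset R (mset_set S))"
    have len: "length xs = card S" unfolding xs_def
      by (metis mset_sorted_list_of_multiset size_image_mset size_mset size_mset_set)
    have srt: "sorted xs" unfolding xs_def by simp
    have flen: "length (filter (\<lambda>x. x < v) xs) = card {i\<in>S. R i < v}"
    proof -
      have "length (filter (\<lambda>x. x < v) xs) = size (mset (filter (\<lambda>x. x < v) xs))" by (simp only: size_mset)
      also have "\<dots> = size (filter_mset (\<lambda>x. x < v) (image_mset R (mset_set S)))"
        unfolding xs_def mset_filter by simp
      also have "\<dots> = card {i\<in>S. R i < v}" using S by (simp add: filter_mset_image_mset filter_mset_mset_set)
      finally show ?thesis .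
    qed
    have "conf_quantile \<alpha> S R = ereal (xs ! (k-1))"
      using False by (simp add: conf_quantile_def k_def[symmetric] xs_def Let_def)
    then have "(ereal v > conf_quantile \<alpha> S R) \<longleftrightarrow> xs!(k-1) < v" by simp
    also have "\<dots> \<longleftrightarrow> k \<le> card {i\<in>S. R i < v}"
      using sorted_nth_less_iff[OF srt k1, of v] False len flen by simp
    finally have eq: "(ereal v > conf_quantile \<alpha> S R) \<longleftrightarrow> k \<le> card {i\<in>S. R i < v}" .
    have c1: "(1-\<alpha>)*(real (card S)+1) \<le> real (card S)" using kle[of "card S"] False by (simp add: not_less)
    show ?thesis unfolding eq using kle[of "card {i\<in>S. R i < v}"] c1 by blast
  qed
qed



lemma ereal_interval_miss:
  "(\<not> (ereal m - q \<le> ereal y \<and> ereal y \<le> ereal m + q)) \<longleftrightarrow> ereal \<bar>y - m\<bar> > q"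
  by (cases q) auto

lemma card_image_pred:
  assumes "inj \<sigma>"
  shows "card {l\<in>B. P (\<sigma> l)} = card {l\<in>\<sigma>`B. P l}"
proof -
  have "{l\<in>\<sigma>`B. P l} = \<sigma> ` {l\<in>B. P (\<sigma> l)}" by auto
  then show ?thesis using assms by (simp add: card_image inj_on_subset)
qed

lemma real_card_sum:
  "finite B \<Longrightarrow> real (card {i\<in>B. P i}) = (\<Sum>i\<in>B. if P i then 1 else 0)"
  by (simp add: sum.inter_filter[symmetric])

locale scop =
  fixes M :: "'w measure"
    and X :: "'i \<Rightarrow> 'w \<Rightarrow> real ^ 'd"
    and Y :: "'i \<Rightarrow> 'w \<Rightarrow> real"
    and \<mu> g :: "real ^ 'd \<Rightarrow> real"
    and \<tau> :: "('i \<Rightarrow> real) \<Rightarrow> real"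
    and C U :: "'i set"
    and \<alpha> :: real
  assumes prob: "prob_space M"
    and finC: "finite C" and finU: "finite U" and disj: "C \<inter> U = {}"
    and alpha: "0 < \<alpha>" "\<alpha> < 1"
    and mu_meas: "\<mu> \<in> borel_measurable borel"
    and g_meas: "g \<in> borel_measurable borel"
    and X_meas: "\<And>i. i \<in> C \<union> U \<Longrightarrow> X i \<in> borel_measurable M"
    and Y_meas: "\<And>i. i \<in> C \<union> U \<Longrightarrow> Y i \<in> borel_measurable M"
    and indep: "prob_space.indep_vars M (\<lambda>_. borel) (\<lambda>i \<omega>. (X i \<omega>, Y i \<omega>)) (C \<union> U)"
    and ident: "\<And>i k. i \<in> C \<union> U \<Longrightarrow> k \<in> C \<union> U \<Longrightarrow>
        distr M borel (\<lambda>\<omega>. (X i \<omega>, Y i \<omega>)) = distr M borel (\<lambda>\<omega>. (X k \<omega>, Y k \<omega>))"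
    and tau_meas: "\<tau> \<in> borel_measurable (PiM (C \<union> U) (\<lambda>_. borel))"
    and tau_sym: "\<And>\<pi> f. \<pi> permutes (C \<union> U) \<Longrightarrow> f \<in> extensional (C \<union> U) \<Longrightarrow> \<tau> (f \<circ> \<pi>) = \<tau> f"
    and Une: "U \<noteq> {}"
begin

abbreviation "I \<equiv> C \<union> U"

definition tt :: "('i \<Rightarrow> (real^'d) \<times> real) \<Rightarrow> 'i \<Rightarrow> real" where "tt f i = g (fst (f i))"
definition rr :: "('i \<Rightarrow> (real^'d) \<times> real) \<Rightarrow> 'i \<Rightarrow> real" where "rr f i = \<bar>snd (f i) - \<mu> (fst (f i))\<bar>"
definition th where "th f = \<tau> (restrict (tt f) I)"
definition sel where "sel f A = {i\<in>A. tt f i \<le> th f}"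
definition missf where "missf f j = ((1-\<alpha>)*(real (card (sel f C))+1) \<le> real (card (sel f C)) \<and>
     (1-\<alpha>)*(real (card (sel f C))+1) \<le> real (card {i\<in>sel f C. rr f i < rr f j}))"
definition rho where "rho \<sigma> f = (\<lambda>i\<in>I. f (\<sigma> i))"
definition Z where "Z \<omega> = (\<lambda>i\<in>I. (X i \<omega>, Y i \<omega>))"

lemma finI: "finite I" using finC finU by simp

lemma th_Z: "tau_hat \<tau> g C U X \<omega> = th (Z \<omega>)"
  unfolding tau_hat_def th_def
  by (rule arg_cong[where f=\<tau>]) (auto simp: Z_def tt_def restrict_def)

lemma sel_Z: "A \<subseteq> I \<Longrightarrow> selected \<tau> g C U X A \<omega> = sel (Z \<omega>) A"
  unfolding selected_def sel_def th_Z by (auto simp: Z_def tt_def)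

lemma miss_Z:
  assumes j: "j \<in> I"
  shows "scop_miss \<alpha> \<mu> \<tau> g C U X Y j \<omega> = missf (Z \<omega>) j"
proof -
  have "scop_miss \<alpha> \<mu> \<tau> g C U X Y j \<omega> \<longleftrightarrow>
    ereal \<bar>Y j \<omega> - \<mu> (X j \<omega>)\<bar> > conf_quantile \<alpha> (selected \<tau> g C U X C \<omega>) (\<lambda>i. \<bar>Y i \<omega> - \<mu> (X i \<omega>)\<bar>)"
    unfolding scop_miss_def Let_def ereal_interval_miss by simp
  also have "selected \<tau> g C U X C \<omega> = sel (Z \<omega>) C" by (rule sel_Z) auto
  also have "ereal \<bar>Y j \<omega> - \<mu> (X j \<omega>)\<bar> > conf_quantile \<alpha> (sel (Z \<omega>) C) (\<lambda>i. \<bar>Y i \<omega> - \<mu> (X i \<omega>)\<bar>)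
     \<longleftrightarrow> missf (Z \<omega>) j"
  proof -
    have fin: "finite (sel (Z \<omega>) C)" using finC by (simp add: sel_def)
    have "{i\<in>sel (Z \<omega>) C. \<bar>Y i \<omega> - \<mu> (X i \<omega>)\<bar> < \<bar>Y j \<omega> - \<mu> (X j \<omega>)\<bar>}
       = {i\<in>sel (Z \<omega>) C. rr (Z \<omega>) i < rr (Z \<omega>) j}"
      using j by (auto simp: sel_def rr_def Z_def)
    then show ?thesis
      unfolding conf_quantile_less[OF fin alpha] missf_def by simp
  qed
  finally show ?thesis .
qed

lemma th_rho:
  assumes "\<sigma> permutes I"
  shows "th (rho \<sigma> f) = th f"
proof -
  have "restrict (tt (rho \<sigma> f)) I = restrict (tt f) I \<circ> \<sigma>"
  proof
    fix l show "restrict (tt (rho \<sigma> f)) I l = (restrict (tt f) I \<circ> \<sigma>) l"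
      using assms permutes_in_image[OF assms] permutes_not_in[OF assms]
      by (cases "l \<in> I") (auto simp: tt_def rho_def)
  qed
  then show ?thesis unfolding th_def using tau_sym[OF assms, of "restrict (tt f) I"] by simp
qed

lemma tt_rho: "l \<in> I \<Longrightarrow> tt (rho \<sigma> f) l = tt f (\<sigma> l)"
  by (simp add: tt_def rho_def)
lemma rr_rho: "l \<in> I \<Longrightarrow> rr (rho \<sigma> f) l = rr f (\<sigma> l)"
  by (simp add: rr_def rho_def)

end






context scop begin
definition sw where "sw j i = Transposition.transpose i j"

lemma sw_facts:
  assumes j: "j \<in> U" and i: "i \<in> insert j C"
  shows "sw j i permutes I" "sw j i j = i" "inj (sw j i)"
    "sw j i ` C = insert j C - {i}"
    "sw j i ` U = insert i (U - {j})"
proof -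
  have jnC: "j \<notin> C" using j disj by auto
  show "sw j i permutes I" unfolding sw_def using i j by (intro permutes_swap_id) auto
  then show "inj (sw j i)" by (rule permutes_inj)
  show "sw j i j = i" by (simp add: sw_def)
  show "sw j i ` C = insert j C - {i}"
    using i jnC by (cases "i = j") (auto simp: sw_def Transposition.transpose_def image_iff)
  show "sw j i ` U = insert i (U - {j})"
    using i j disj by (cases "i = j") (auto simp: sw_def Transposition.transpose_def image_iff)
qed



lemma card_sel_rho:
  assumes j: "j \<in> U" and i: "i \<in> insert j C" and B: "B \<subseteq> I"
  shows "card {l\<in>sel (rho (sw j i) f) B. P (tt f (sw j i l)) (rr f (sw j i l))}
       = card {l\<in>sw j i ` B. tt f l \<le> th f \<and> P (tt f l) (rr f l)}"
proof -
  have "{l\<in>sel (rho (sw j i) f) B. P (tt f (sw j i l)) (rr f (sw j i l))}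
     = {l\<in>B. tt f (sw j i l) \<le> th f \<and> P (tt f (sw j i l)) (rr f (sw j i l))}"
    using B th_rho[OF sw_facts(1)[OF j i]] tt_rho by (auto simp: sel_def)
  then show ?thesis using card_image_pred[OF sw_facts(3)[OF j i]] by simp
qed


lemma per_i:
  fixes f :: "'i \<Rightarrow> (real^'d) \<times> real"
  assumes j: "j \<in> U" and i: "i \<in> insert j C"
  defines "f' \<equiv> rho (sw j i) f"
  shows "j \<in> sel f' U \<longleftrightarrow> i \<in> sel f (insert j C)"
    "i \<in> sel f (insert j C) \<Longrightarrow> card (sel f' U) = card (sel f (U - {j})) + 1"
    "i \<in> sel f (insert j C) \<Longrightarrow> card (sel f' C) = card (sel f (insert j C)) - 1"
    "card {l\<in>sel f' C. rr f' l < rr f' j} = card {l\<in>sel f (insert j C). rr f l < rr f i}"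
proof -
  note sf = sw_facts[OF j i]
  have jI: "j \<in> I" using j by auto
  show "j \<in> sel f' U \<longleftrightarrow> i \<in> sel f (insert j C)"
    using i j th_rho[OF sf(1)] tt_rho[OF jI] sf(2) by (auto simp: sel_def f'_def)
  have iU: "i \<notin> U - {j}" using i disj by auto
  have finU': "finite (sel f (U - {j}))" using finU by (simp add: sel_def)
  show "card (sel f' U) = card (sel f (U - {j})) + 1" if "i \<in> sel f (insert j C)"
  proof -
    have "card (sel f' U) = card {l\<in>sel f' U. True}" by simp
    also have "\<dots> = card {l\<in>sw j i ` U. tt f l \<le> th f \<and> True}"
      unfolding f'_def by (rule card_sel_rho[OF j i, where P="\<lambda>_ _. True"]) auto
    also have "{l\<in>sw j i ` U. tt f l \<le> th f \<and> True} = insert i (sel f (U - {j}))"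
      using that sf(5) by (auto simp: sel_def)
    also have "card \<dots> = card (sel f (U - {j})) + 1" using iU finU' by (simp add: sel_def)
    finally show ?thesis .
  qed
  have finA: "finite (sel f (insert j C))" using finC by (simp add: sel_def)
  show "card (sel f' C) = card (sel f (insert j C)) - 1" if "i \<in> sel f (insert j C)"
  proof -
    have "card (sel f' C) = card {l\<in>sel f' C. True}" by simp
    also have "\<dots> = card {l\<in>sw j i ` C. tt f l \<le> th f \<and> True}"
      unfolding f'_def by (rule card_sel_rho[OF j i, where P="\<lambda>_ _. True"]) auto
    also have "{l\<in>sw j i ` C. tt f l \<le> th f \<and> True} = sel f (insert j C) - {i}"
      using sf(4) by (auto simp: sel_def)
    also have "card \<dots> = card (sel f (insert j C)) - 1" using that finA by simp
    finally show ?thesis .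
  qed
  have "{l\<in>sel f' C. rr f' l < rr f' j} = {l\<in>sel f' C. rr f (sw j i l) < rr f i}"
    using rr_rho[OF jI] sf(2) rr_rho by (auto simp: f'_def sel_def)
  also have "card \<dots> = card {l\<in>sw j i ` C. tt f l \<le> th f \<and> rr f l < rr f i}"
    unfolding f'_def by (rule card_sel_rho[OF j i, where P="\<lambda>_ r. r < rr f i"]) auto
  also have "{l\<in>sw j i ` C. tt f l \<le> th f \<and> rr f l < rr f i} = {l\<in>sel f (insert j C). rr f l < rr f i}"
    using sf(4) by (auto simp: sel_def)
  finally show "card {l\<in>sel f' C. rr f' l < rr f' j} = card {l\<in>sel f (insert j C). rr f l < rr f i}" .
qed

end






context scop begin
definition FF where "FF W j f = (if j \<in> sel f U \<and> missf f j then W (real (card (sel f U))) else 0)"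
definition HH where "HH W j f = (if j \<in> sel f U then W (real (card (sel f U))) else 0)"
definition LL where "LL W j f = (if j \<in> sel f U then W (real (card (sel f U))) / (real (card (sel f C)) + 1) else 0)"

lemma sum_if_const:
  "finite A \<Longrightarrow> B \<subseteq> A \<Longrightarrow> (\<Sum>i\<in>A. if i \<in> B then c else 0) = c * real (card B)"
  by (simp add: sum.If_cases Int_absorb1)

lemma sums:
  fixes f :: "'i \<Rightarrow> (real^'d) \<times> real" and W :: "real \<Rightarrow> real"
  assumes j: "j \<in> U"
  defines "SA \<equiv> sel f (insert j C)"
  defines "K \<equiv> card SA"
  defines "w \<equiv> W (real (card (sel f (U - {j})) + 1))"
  shows "(\<Sum>i\<in>insert j C. HH W j (rho (sw j i) f)) = w * real K"
    "(\<Sum>i\<in>insert j C. LL W j (rho (sw j i) f)) = (if K = 0 then 0 else w)"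
    "(\<Sum>i\<in>insert j C. FF W j (rho (sw j i) f)) = w * real (card {i\<in>SA.
        (1-\<alpha>)*real K \<le> real K - 1 \<and> (1-\<alpha>)*real K \<le> real (card {l\<in>SA. rr f l < rr f i})})"
proof -
  have finA: "finite (insert j C)" using finC by simp
  have SAA: "SA \<subseteq> insert j C" by (auto simp: SA_def sel_def)
  note P = per_i[OF j]
  have "(\<Sum>i\<in>insert j C. HH W j (rho (sw j i) f)) = (\<Sum>i\<in>insert j C. if i \<in> SA then w else 0)"
    by (rule sum.cong) (auto simp: HH_def P w_def SA_def)
  also have "\<dots> = w * real K" using sum_if_const[OF finA SAA] by (simp add: K_def)
  finally show "(\<Sum>i\<in>insert j C. HH W j (rho (sw j i) f)) = w * real K" .
  have "(\<Sum>i\<in>insert j C. LL W j (rho (sw j i) f)) = (\<Sum>i\<in>insert j C. if i \<in> SA then w / real K else 0)"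
  proof (rule sum.cong)
    fix i assume i: "i \<in> insert j C"
    show "LL W j (rho (sw j i) f) = (if i \<in> SA then w / real K else 0)"
    proof (cases "i \<in> SA")
      case True
      then have "K \<ge> 1" unfolding K_def using finA SAA
        by (metis One_nat_def Suc_leI card_gt_0_iff empty_iff finite_subset)
      then show ?thesis using True i by (auto simp: LL_def P w_def SA_def K_def of_nat_diff)
    qed (use i in \<open>auto simp: LL_def P SA_def\<close>)
  qed simp
  also have "\<dots> = (if K = 0 then 0 else w)" using sum_if_const[OF finA SAA] by (simp add: K_def)
  finally show "(\<Sum>i\<in>insert j C. LL W j (rho (sw j i) f)) = (if K = 0 then 0 else w)" .
  define Bc where "Bc = {i\<in>SA. (1-\<alpha>)*real K \<le> real K - 1 \<and> (1-\<alpha>)*real K \<le> real (card {l\<in>SA. rr f l < rr f i})}"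
  have "(\<Sum>i\<in>insert j C. FF W j (rho (sw j i) f)) = (\<Sum>i\<in>insert j C. if i \<in> Bc then w else 0)"
  proof (rule sum.cong)
    fix i assume i: "i \<in> insert j C"
    show "FF W j (rho (sw j i) f) = (if i \<in> Bc then w else 0)"
    proof (cases "i \<in> SA")
      case True
      then have "K \<ge> 1" unfolding K_def using finA SAA
        by (metis One_nat_def Suc_leI card_gt_0_iff empty_iff finite_subset)
      then have e: "real (K - 1) = real K - 1" by (simp add: of_nat_diff)
      have e2: "card (sel (rho (sw j i) f) C) = K - 1" using True i P(3) by (simp add: SA_def K_def)
      have r4: "card {l \<in> sel (rho (sw j i) f) C. rr (rho (sw j i) f) l < rr (rho (sw j i) f) j}
          = card {l\<in>SA. rr f l < rr f i}" using P(4)[OF i] unfolding SA_def .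
      have r3: "real (card (sel (rho (sw j i) f) C)) = real K - 1" using e2 e by simp
      have m: "missf (rho (sw j i) f) j \<longleftrightarrow> ((1-\<alpha>)*real K \<le> real K - 1 \<and> (1-\<alpha>)*real K \<le> real (card {l\<in>SA. rr f l < rr f i}))"
        unfolding missf_def r4 r3 by simp
      have u: "j \<in> sel (rho (sw j i) f) U" using P(1)[OF i] True unfolding SA_def by simp
      have c: "card (sel (rho (sw j i) f) U) = card (sel f (U-{j})) + 1" using P(2)[OF i] True unfolding SA_def by simp
      show ?thesis unfolding FF_def Bc_def using u c m True by (simp add: w_def)
    next
      case False
      have u: "j \<notin> sel (rho (sw j i) f) U" using P(1)[OF i] False unfolding SA_def by simp
      then show ?thesis using False by (simp add: FF_def Bc_def)
    qed
  qed simp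
  also have "\<dots> = w * real (card Bc)" by (rule sum_if_const[OF finA]) (use SAA in \<open>auto simp: Bc_def\<close>)
  finally show "(\<Sum>i\<in>insert j C. FF W j (rho (sw j i) f)) = w * real (card {i\<in>SA.
        (1-\<alpha>)*real K \<le> real K - 1 \<and> (1-\<alpha>)*real K \<le> real (card {l\<in>SA. rr f l < rr f i})})"
    by (simp add: Bc_def)
qed

end



lemma comb_bounds:
  fixes r :: "'a \<Rightarrow> real" and \<alpha> :: real
  assumes S: "finite S" and al: "0 < \<alpha>" "\<alpha> < 1"
  defines "K \<equiv> card S"
  defines "c \<equiv> card {i\<in>S. (1-\<alpha>)*real K \<le> real K - 1 \<and> (1-\<alpha>)*real K \<le> real (card {l\<in>S. r l < r i})}"
  shows "real c \<le> \<alpha> * real K"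
    and "inj_on r S \<Longrightarrow> K \<ge> 1 \<Longrightarrow> real c \<ge> \<alpha> * real K - 1"
proof -
  define k where "k = nat \<lceil>(1-\<alpha>) * real K\<rceil>"
  have kle: "k \<le> m \<longleftrightarrow> (1-\<alpha>) * real K \<le> real m" for m
    unfolding k_def by (rule nat_ceiling_le_eq)
  have kge: "(1-\<alpha>) * real K \<le> real k" unfolding k_def by linarith
  have klt: "real k < (1-\<alpha>) * real K + 1" unfolding k_def using al
    by (simp add: of_nat_nat) linarith
  have Kcase: "K \<ge> 1 \<Longrightarrow> real K - 1 = real (K - 1)" by (simp add: of_nat_diff)
  show "real c \<le> \<alpha> * real K"
  proof (cases "K = 0")
    case True
    then have "S = {}" using S K_def by simp
    then show ?thesis by (simp add: c_def K_def)
  next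
    case False
    then have K1: "K \<ge> 1" by simp
    show ?thesis
    proof (cases "k \<le> K - 1")
      case True
      have "c = card {i\<in>S. k \<le> card {l\<in>S. r l < r i}}"
        unfolding c_def Kcase[OF K1] using True kle by (metis (no_types, lifting))
      also have "\<dots> \<le> K - k" unfolding K_def by (rule rank_upper[OF S])
      finally have "real c \<le> real K - real k" using True K1 by linarith
      then show ?thesis using kge by (simp add: algebra_simps)
    next
      case False
      then have "c = 0" unfolding c_def Kcase[OF K1] using kle by simp
      then show ?thesis using al by simp
    qed
  qed
  assume inj: "inj_on r S" and K1: "K \<ge> 1"
  show "real c \<ge> \<alpha> * real K - 1"
  proof (cases "k \<le> K - 1")
    case True
    have "c = card {i\<in>S. k \<le> card {l\<in>S. r l < r i}}"
      unfolding c_def Kcase[OF K1] using True kle by (metis (no_types, lifting))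
    also have "\<dots> = K - k" unfolding K_def by (rule rank_exact[OF S inj]) (use True K1 K_def in linarith)
    finally have "real c = real K - real k" using True K1 by simp
    then show ?thesis using klt by (simp add: algebra_simps)
  next
    case False
    then have "(1-\<alpha>) * real K > real (K - 1)" using kle by simp
    then have "\<alpha> * real K < 1" using K1 by (simp add: of_nat_diff algebra_simps)
    then show ?thesis by simp
  qed
qed

context scop begin

lemma pw_upper:
  assumes j: "j \<in> U" and W: "\<And>x. 0 \<le> W x"
  shows "(\<Sum>i\<in>insert j C. FF W j (rho (sw j i) f)) \<le> \<alpha> * (\<Sum>i\<in>insert j C. HH W j (rho (sw j i) f))"
proof -
  have S: "finite (sel f (insert j C))" using finC by (simp add: sel_def)
  define w where "w = W (real (card (sel f (U - {j})) + 1))"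
  have w: "0 \<le> w" unfolding w_def by (rule W)
  note cb = comb_bounds(1)[OF S alpha, of "rr f"]
  show ?thesis unfolding sums[OF j] w_def[symmetric]
    using mult_left_mono[OF cb w] by (simp add: algebra_simps)
qed

lemma pw_lower:
  assumes j: "j \<in> U" and W: "\<And>x. 0 \<le> W x" and inj: "inj_on (rr f) (sel f (insert j C))"
  shows "(\<Sum>i\<in>insert j C. FF W j (rho (sw j i) f)) \<ge>
    \<alpha> * (\<Sum>i\<in>insert j C. HH W j (rho (sw j i) f)) - (\<Sum>i\<in>insert j C. LL W j (rho (sw j i) f))"
proof -
  have S: "finite (sel f (insert j C))" using finC by (simp add: sel_def)
  define w where "w = W (real (card (sel f (U - {j})) + 1))"
  have w: "0 \<le> w" unfolding w_def by (rule W)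
  show ?thesis
  proof (cases "card (sel f (insert j C)) = 0")
    case True
    then have "sel f (insert j C) = {}" using S by simp
    then show ?thesis unfolding sums[OF j] by simp
  next
    case False
    then have K1: "card (sel f (insert j C)) \<ge> 1" by simp
    note cb = comb_bounds(2)[OF S alpha inj K1]
    show ?thesis unfolding sums[OF j] w_def[symmetric]
      using mult_left_mono[OF cb w] False by (simp add: algebra_simps)
  qed
qed

end



context scop begin

abbreviation "Bm \<equiv> PiM I (\<lambda>_. borel :: ((real^'d) \<times> real) measure)"

lemma meas_fst[measurable]: "i \<in> I \<Longrightarrow> (\<lambda>x. fst (x i)) \<in> borel_measurable Bm"
proof -
  assume i: "i \<in> I"
  have "(\<lambda>x. x i) \<in> Bm \<rightarrow>\<^sub>M borel" using i by (rule measurable_component_singleton)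
  moreover have "fst \<in> (borel :: ((real^'d) \<times> real) measure) \<rightarrow>\<^sub>M borel"
    using measurable_fst[of "borel :: (real^'d) measure" "borel :: real measure"] unfolding borel_prod .
  ultimately show ?thesis by (rule measurable_compose)
qed

lemma meas_snd[measurable]: "i \<in> I \<Longrightarrow> (\<lambda>x. snd (x i)) \<in> borel_measurable Bm"
proof -
  assume i: "i \<in> I"
  have "(\<lambda>x. x i) \<in> Bm \<rightarrow>\<^sub>M borel" using i by (rule measurable_component_singleton)
  moreover have "snd \<in> (borel :: ((real^'d) \<times> real) measure) \<rightarrow>\<^sub>M borel"
    using measurable_snd[of "borel :: (real^'d) measure" "borel :: real measure"] unfolding borel_prod .
  ultimately show ?thesis by (rule measurable_compose)
qed

lemma meas_tt[measurable]: "i \<in> I \<Longrightarrow> (\<lambda>x. tt x i) \<in> borel_measurable Bm"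
  unfolding tt_def using g_meas by measurable

lemma meas_rr[measurable]: "i \<in> I \<Longrightarrow> (\<lambda>x. rr x i) \<in> borel_measurable Bm"
  unfolding rr_def using mu_meas by measurable

lemma meas_th[measurable]: "th \<in> borel_measurable Bm"
proof -
  have "(\<lambda>x. restrict (tt x) I) \<in> Bm \<rightarrow>\<^sub>M PiM I (\<lambda>_. borel)"
    by (rule measurable_restrict) (rule meas_tt)
  then show ?thesis unfolding th_def[abs_def] using tau_meas by (rule measurable_compose)
qed

lemma pred_tt_le: "i \<in> I \<Longrightarrow> Measurable.pred Bm (\<lambda>x. tt x i \<le> th x)"
proof -
  assume i: "i \<in> I"
  show ?thesis unfolding pred_def by (rule borel_measurable_le[OF meas_tt[OF i] meas_th])
qed

lemma pred_rr_less: "i \<in> I \<Longrightarrow> j \<in> I \<Longrightarrow> Measurable.pred Bm (\<lambda>x. rr x i < rr x j)"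
proof -
  assume i: "i \<in> I" and j: "j \<in> I"
  note [measurable] = meas_rr[OF i] meas_rr[OF j]
  show ?thesis by measurable
qed

lemma pred_rr_eq: "i \<in> I \<Longrightarrow> j \<in> I \<Longrightarrow> Measurable.pred Bm (\<lambda>x. rr x i = rr x j)"
proof -
  assume i: "i \<in> I" and j: "j \<in> I"
  show ?thesis unfolding pred_def by (rule borel_measurable_eq[OF meas_rr[OF i] meas_rr[OF j]])
qed

lemma meas_card:
  assumes "finite B" "\<And>i. i \<in> B \<Longrightarrow> Measurable.pred Bm (P i)"
  shows "(\<lambda>x. real (card {i\<in>B. P i x})) \<in> borel_measurable Bm"
  unfolding real_card_sum[OF assms(1)]
  by (intro borel_measurable_sum measurable_If) (use assms(2) in \<open>auto simp: pred_def\<close>)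

lemma meas_card_sel: "B \<subseteq> I \<Longrightarrow> (\<lambda>x. real (card (sel x B))) \<in> borel_measurable Bm"
  unfolding sel_def
  by (rule meas_card) (use finI finite_subset pred_tt_le in \<open>auto\<close>)

lemma meas_card_rank: "B \<subseteq> I \<Longrightarrow> j \<in> I \<Longrightarrow>
   (\<lambda>x. real (card {l\<in>sel x B. rr x l < rr x j})) \<in> borel_measurable Bm"
proof -
  assume B: "B \<subseteq> I" and j: "j \<in> I"
  have "{l\<in>sel x B. rr x l < rr x j} = {l\<in>B. tt x l \<le> th x \<and> rr x l < rr x j}" for x
    by (auto simp: sel_def)
  moreover have "(\<lambda>x. real (card {l\<in>B. tt x l \<le> th x \<and> rr x l < rr x j})) \<in> borel_measurable Bm"
  proof (rule meas_card)
    show "finite B" using finI B finite_subset by auto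
    fix l assume "l \<in> B"
    then have l: "l \<in> I" using B by auto
    note [measurable] = pred_tt_le[OF l] pred_rr_less[OF l j]
    show "Measurable.pred Bm (\<lambda>x. tt x l \<le> th x \<and> rr x l < rr x j)" by measurable
  qed
  ultimately show ?thesis by simp
qed

lemma pred_sel: "j \<in> I \<Longrightarrow> Measurable.pred Bm (\<lambda>x. j \<in> sel x B)"
proof -
  assume j: "j \<in> I"
  note [measurable] = pred_tt_le[OF j]
  show ?thesis unfolding sel_def by measurable
qed

lemma pred_missf: "j \<in> I \<Longrightarrow> Measurable.pred Bm (\<lambda>x. missf x j)"
proof -
  assume j: "j \<in> I"
  have m1: "(\<lambda>x. real (card (sel x C))) \<in> borel_measurable Bm" by (rule meas_card_sel) auto
  have m2: "(\<lambda>x. real (card {i\<in>sel x C. rr x i < rr x j})) \<in> borel_measurable Bm"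
    by (rule meas_card_rank[OF _ j]) auto
  have c: "(\<lambda>t::real. (1-\<alpha>)*(t+1)) \<in> borel_measurable borel" by measurable
  have m3: "(\<lambda>x. (1-\<alpha>)*(real (card (sel x C))+1)) \<in> borel_measurable Bm"
    using measurable_compose[OF m1 c] by simp
  show ?thesis unfolding pred_def missf_def
    by (intro sets.sets_Collect_conj borel_measurable_le m1 m2 m3)
qed

lemma pred_inj: "Measurable.pred Bm (\<lambda>x. inj_on (rr x) I)"
proof -
  have "Measurable.pred Bm (\<lambda>x. \<forall>a\<in>I. \<forall>b\<in>I. rr x a = rr x b \<longrightarrow> a = b)"
    by (intro pred_intros_finite pred_intros_logic finI pred_rr_eq) auto
  then show ?thesis unfolding inj_on_def .
qed

end


context scop begin

lemma meas_FF:
  assumes j: "j \<in> U" and W: "W \<in> borel_measurable borel"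
  shows "FF W j \<in> borel_measurable Bm" "HH W j \<in> borel_measurable Bm" "LL W j \<in> borel_measurable Bm"
proof -
  have jI: "j \<in> I" using j by auto
  have m1: "(\<lambda>x. real (card (sel x U))) \<in> borel_measurable Bm" by (rule meas_card_sel) auto
  have m2: "(\<lambda>x. real (card (sel x C))) \<in> borel_measurable Bm" by (rule meas_card_sel) auto
  have mw: "(\<lambda>x. W (real (card (sel x U)))) \<in> borel_measurable Bm"
    using measurable_compose[OF m1 W] .
  note [measurable] = m1 m2 mw pred_sel[OF jI] pred_missf[OF jI]
  show "FF W j \<in> borel_measurable Bm" unfolding FF_def[abs_def] by measurable
  show "HH W j \<in> borel_measurable Bm" unfolding HH_def[abs_def] by measurable
  show "LL W j \<in> borel_measurable Bm" unfolding LL_def[abs_def] by measurable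
qed

lemma bound_FF:
  assumes W: "\<And>s. 0 \<le> W s \<and> W s \<le> 1"
  shows "\<bar>FF W j x\<bar> \<le> 1" "\<bar>HH W j x\<bar> \<le> 1" "\<bar>LL W j x\<bar> \<le> 1"
proof -
  show "\<bar>FF W j x\<bar> \<le> 1" "\<bar>HH W j x\<bar> \<le> 1" unfolding FF_def HH_def using W by auto
  have "W s / (real n + 1) \<le> 1" for s n
  proof -
    have "W s / (real n + 1) \<le> W s / 1" using W[of s] by (intro divide_left_mono) auto
    then show ?thesis using W[of s] by simp
  qed
  then show "\<bar>LL W j x\<bar> \<le> 1" unfolding LL_def using W by auto
qed

definition N where "N i = distr M borel (\<lambda>\<omega>. (X i \<omega>, Y i \<omega>))"
definition Q where "Q = distr M Bm Z"

lemma Z_meas: "Z \<in> M \<rightarrow>\<^sub>M Bm"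
  unfolding Z_def[abs_def]
  by (rule measurable_restrict) (intro borel_measurable_Pair X_meas Y_meas; assumption)

lemma Q_prob: "prob_space Q"
  unfolding Q_def by (rule prob_space.prob_space_distr[OF prob Z_meas])

lemma sets_Q: "sets Q = sets Bm" and space_Q: "space Q = space Bm"
  unfolding Q_def by simp_all

lemma N_prob: "i \<in> I \<Longrightarrow> prob_space (N i)"
  unfolding N_def by (rule prob_space.prob_space_distr[OF prob]) (intro borel_measurable_Pair X_meas Y_meas; assumption)

lemma Q_PiM: "Q = PiM I N"
proof -
  have "I \<noteq> {}" using Une by auto
  have rv: "\<And>i. i \<in> I \<Longrightarrow> (\<lambda>\<omega>. (X i \<omega>, Y i \<omega>)) \<in> M \<rightarrow>\<^sub>M borel"
    by (intro borel_measurable_Pair X_meas Y_meas)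
  have "distr M (\<Pi>\<^sub>M i\<in>I. borel) (\<lambda>x. \<lambda>i\<in>I. (X i x, Y i x)) = (\<Pi>\<^sub>M i\<in>I. distr M borel (\<lambda>\<omega>. (X i \<omega>, Y i \<omega>)))"
    using prob_space.indep_vars_iff_distr_eq_PiM'[OF prob \<open>I \<noteq> {}\<close>, where M'="\<lambda>_. borel" and X="\<lambda>i \<omega>. (X i \<omega>, Y i \<omega>)"] rv indep
    by simp
  then show ?thesis unfolding Q_def N_def Z_def[abs_def] by simp
qed

lemma rho_meas: "\<sigma> permutes I \<Longrightarrow> rho \<sigma> \<in> Bm \<rightarrow>\<^sub>M Bm"
  unfolding rho_def[abs_def]
  by (rule measurable_restrict) (rule measurable_component_singleton, use permutes_in_image[of \<sigma> I] in blast)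

lemma Q_inv:
  assumes s: "\<sigma> permutes I"
  shows "distr Q Bm (rho \<sigma>) = Q"
proof -
  have "distr (PiM I N) (PiM I (\<lambda>i. N (\<sigma> i))) (\<lambda>\<omega>. \<lambda>n\<in>I. \<omega> (\<sigma> n)) = PiM I (\<lambda>i. N (\<sigma> i))"
    by (rule distr_PiM_reindex) (use N_prob permutes_inj_on[OF s] permutes_in_image[OF s] in auto)
  moreover have "PiM I (\<lambda>i. N (\<sigma> i)) = PiM I N"
  proof (rule PiM_cong)
    fix i assume i: "i \<in> I"
    then have "\<sigma> i \<in> I" using permutes_in_image[OF s] by simp
    then show "N (\<sigma> i) = N i" unfolding N_def using ident i by blast
  qed simp
  moreover have "distr Q Bm (rho \<sigma>) = distr (PiM I N) (PiM I N) (\<lambda>\<omega>. \<lambda>n\<in>I. \<omega> (\<sigma> n))"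
    by (rule distr_cong) (auto simp: Q_PiM rho_def N_def intro!: sets_PiM_cong)
  ultimately show ?thesis using Q_PiM by simp
qed

lemma meas_Q: "h \<in> borel_measurable Bm \<Longrightarrow> h \<in> borel_measurable Q"
  by (simp add: measurable_cong_sets[OF sets_Q refl])

lemma int_inv:
  fixes h :: "_ \<Rightarrow> real"
  assumes s: "\<sigma> permutes I" and h: "h \<in> borel_measurable Bm"
  shows "(\<integral>x. h (rho \<sigma> x) \<partial>Q) = (\<integral>x. h x \<partial>Q)"
proof -
  have r: "rho \<sigma> \<in> Q \<rightarrow>\<^sub>M Bm" using rho_meas[OF s] by (simp add: measurable_cong_sets[OF sets_Q refl])
  show ?thesis using integral_distr[OF r h] Q_inv[OF s] by simp
qed

lemma integ_bdd:
  fixes B :: real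
  assumes h: "h \<in> borel_measurable Bm" and b: "\<And>x. \<bar>h x\<bar> \<le> B"
  shows "integrable Q h"
proof -
  interpret Qp: prob_space Q by (rule Q_prob)
  show ?thesis by (rule Qp.integrable_const_bound[where B=B]) (use b meas_Q[OF h] in auto)
qed

lemma engine:
  fixes B :: real
  assumes j: "j \<in> U" and h: "h \<in> borel_measurable Bm" and b: "\<And>x. \<bar>h x\<bar> \<le> B"
  shows "(\<integral>x. (\<Sum>i\<in>insert j C. h (rho (sw j i) x)) \<partial>Q) = real (card (insert j C)) * (\<integral>x. h x \<partial>Q)"
    "integrable Q (\<lambda>x. \<Sum>i\<in>insert j C. h (rho (sw j i) x))"
proof -
  have s: "i \<in> insert j C \<Longrightarrow> sw j i permutes I" for i using sw_facts(1)[OF j] by auto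
  have ii: "i \<in> insert j C \<Longrightarrow> integrable Q (\<lambda>x. h (rho (sw j i) x))" for i
    by (rule integ_bdd[where B=B]) (use measurable_compose[OF rho_meas[OF s] h] b in auto)
  have "(\<integral>x. (\<Sum>i\<in>insert j C. h (rho (sw j i) x)) \<partial>Q) = (\<Sum>i\<in>insert j C. \<integral>x. h (rho (sw j i) x) \<partial>Q)"
    by (rule Bochner_Integration.integral_sum) (rule ii)
  also have "\<dots> = (\<Sum>i\<in>insert j C. \<integral>x. h x \<partial>Q)"
    by (rule sum.cong) (auto simp: int_inv[OF s h])
  finally show "(\<integral>x. (\<Sum>i\<in>insert j C. h (rho (sw j i) x)) \<partial>Q) = real (card (insert j C)) * (\<integral>x. h x \<partial>Q)"
    by simp
  show "integrable Q (\<lambda>x. \<Sum>i\<in>insert j C. h (rho (sw j i) x))" by (rule Bochner_Integration.integrable_sum) (rule ii)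
qed


lemma card_insert_pos: "real (card (insert j C)) > 0"
  using finC by (simp add: card_gt_0_iff)

lemma int_upper:
  assumes j: "j \<in> U" and Wm: "W \<in> borel_measurable borel" and W: "\<And>s. 0 \<le> W s \<and> W s \<le> 1"
  shows "(\<integral>x. FF W j x \<partial>Q) \<le> \<alpha> * (\<integral>x. HH W j x \<partial>Q)"
proof -
  note mf = meas_FF[OF j Wm]
  note bF = bound_FF[OF W]
  define c where "c = real (card (insert j C))"
  have c: "c > 0" unfolding c_def by (rule card_insert_pos)
  have "c * (\<integral>x. FF W j x \<partial>Q) = (\<integral>x. (\<Sum>i\<in>insert j C. FF W j (rho (sw j i) x)) \<partial>Q)"
    using engine(1)[OF j mf(1) bF(1)] by (simp add: c_def)
  also have "\<dots> \<le> (\<integral>x. \<alpha> * (\<Sum>i\<in>insert j C. HH W j (rho (sw j i) x)) \<partial>Q)"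
    by (rule integral_mono[OF engine(2)[OF j mf(1) bF(1)] integrable_mult_right[OF engine(2)[OF j mf(2) bF(2)]]])
       (rule pw_upper[OF j], use W in auto)
  also have "\<dots> = \<alpha> * (c * (\<integral>x. HH W j x \<partial>Q))"
    using engine(1)[OF j mf(2) bF(2)] by (simp add: c_def)
  finally have "c * (\<integral>x. FF W j x \<partial>Q) \<le> c * (\<alpha> * (\<integral>x. HH W j x \<partial>Q))" by (simp add: algebra_simps)
  then show ?thesis using c by simp
qed

lemma int_lower:
  assumes j: "j \<in> U" and Wm: "W \<in> borel_measurable borel" and W: "\<And>s. 0 \<le> W s \<and> W s \<le> 1"
    and ae: "AE x in Q. inj_on (rr x) I"
  shows "(\<integral>x. FF W j x \<partial>Q) \<ge> \<alpha> * (\<integral>x. HH W j x \<partial>Q) - (\<integral>x. LL W j x \<partial>Q)"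
proof -
  note mf = meas_FF[OF j Wm]
  note bF = bound_FF[OF W]
  define c where "c = real (card (insert j C))"
  have c: "c > 0" unfolding c_def by (rule card_insert_pos)
  have "c * (\<alpha> * (\<integral>x. HH W j x \<partial>Q) - (\<integral>x. LL W j x \<partial>Q)) =
     \<alpha> * (\<integral>x. (\<Sum>i\<in>insert j C. HH W j (rho (sw j i) x)) \<partial>Q) - (\<integral>x. (\<Sum>i\<in>insert j C. LL W j (rho (sw j i) x)) \<partial>Q)"
    using engine(1)[OF j mf(2) bF(2)] engine(1)[OF j mf(3) bF(3)] by (simp add: c_def algebra_simps)
  also have "\<dots> = (\<integral>x. \<alpha> * (\<Sum>i\<in>insert j C. HH W j (rho (sw j i) x)) - (\<Sum>i\<in>insert j C. LL W j (rho (sw j i) x)) \<partial>Q)"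
    using engine(2)[OF j mf(2) bF(2)] engine(2)[OF j mf(3) bF(3)] by simp
  also have "\<dots> \<le> (\<integral>x. (\<Sum>i\<in>insert j C. FF W j (rho (sw j i) x)) \<partial>Q)"
  proof (rule integral_mono_AE)
    show "integrable Q (\<lambda>x. \<alpha> * (\<Sum>i\<in>insert j C. HH W j (rho (sw j i) x)) - (\<Sum>i\<in>insert j C. LL W j (rho (sw j i) x)))"
      using engine(2)[OF j mf(2) bF(2)] engine(2)[OF j mf(3) bF(3)] by simp
    show "integrable Q (\<lambda>x. \<Sum>i\<in>insert j C. FF W j (rho (sw j i) x))" by (rule engine(2)[OF j mf(1) bF(1)])
    show "AE x in Q. \<alpha> * (\<Sum>i\<in>insert j C. HH W j (rho (sw j i) x)) - (\<Sum>i\<in>insert j C. LL W j (rho (sw j i) x))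
        \<le> (\<Sum>i\<in>insert j C. FF W j (rho (sw j i) x))"
      using ae
    proof eventually_elim
      case (elim x)
      have "sel x (insert j C) \<subseteq> I" using j by (auto simp: sel_def)
      then have "inj_on (rr x) (sel x (insert j C))" using elim inj_on_subset by blast
      then show ?case using pw_lower[OF j _ ] W by auto
    qed
  qed
  also have "\<dots> = c * (\<integral>x. FF W j x \<partial>Q)"
    using engine(1)[OF j mf(1) bF(1)] by (simp add: c_def)
  finally show ?thesis using c by (simp add: mult_le_cancel_left_pos)
qed


end


context scop begin

lemma int_Z:
  fixes h :: "_ \<Rightarrow> real"
  assumes h: "h \<in> borel_measurable Bm"
  shows "(\<integral>\<omega>. h (Z \<omega>) \<partial>M) = (\<integral>x. h x \<partial>Q)"
  unfolding Q_def using integral_distr[OF Z_meas h] by simp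

lemma measure_Z:
  assumes P: "Measurable.pred Bm P"
  shows "measure M {\<omega>\<in>space M. P (Z \<omega>)} = (\<integral>x. (if P x then 1 else 0) \<partial>Q)"
proof -
  define S where "S = {x\<in>space Bm. P x}"
  have S: "S \<in> sets Bm" using P unfolding S_def pred_def .
  have "Z -` S \<inter> space M = {\<omega>\<in>space M. P (Z \<omega>)}"
    using measurable_space[OF Z_meas] by (auto simp: S_def)
  then have "measure M {\<omega>\<in>space M. P (Z \<omega>)} = measure Q S"
    unfolding Q_def using measure_distr[OF Z_meas S] by simp
  also have "\<dots> = (\<integral>x. indicator S x \<partial>Q)"
    using Bochner_Integration.integral_indicator[of Q S] S space_Q sets.sets_into_space[OF S] by (simp add: Int_absorb2)
  also have "\<dots> = (\<integral>x. (if P x then 1 else 0) \<partial>Q)"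
    by (rule Bochner_Integration.integral_cong) (auto simp: S_def space_Q indicator_def)
  finally show ?thesis .
qed

lemma AE_Q_inj:
  assumes "AE \<omega> in M. inj_on (\<lambda>i. \<bar>Y i \<omega> - \<mu> (X i \<omega>)\<bar>) I"
  shows "AE x in Q. inj_on (rr x) I"
proof -
  have "AE \<omega> in M. inj_on (rr (Z \<omega>)) I"
    using assms
  proof eventually_elim
    case (elim \<omega>)
    show ?case using elim by (rule inj_on_cong[THEN iffD1, rotated]) (simp add: rr_def Z_def)
  qed
  then show ?thesis unfolding Q_def
    using AE_distr_iff[OF Z_meas, of "\<lambda>x. inj_on (rr x) I"] pred_inj unfolding pred_def by simp
qed

definition W2 :: "real \<Rightarrow> real" where "W2 s = 1 / max s 1"

lemma W2: "0 \<le> W2 s \<and> W2 s \<le> 1" "W2 \<in> borel_measurable borel"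
  unfolding W2_def[abs_def] by (auto simp: field_simps) measurable

lemma sum_FF: "(\<Sum>j\<in>U. FF W2 j x) = real (card {j\<in>sel x U. missf x j}) / real (max (card (sel x U)) 1)"
proof -
  have "(\<Sum>j\<in>U. FF W2 j x) = (\<Sum>j\<in>U. if j \<in> {j\<in>sel x U. missf x j} then W2 (real (card (sel x U))) else 0)"
    by (rule sum.cong) (auto simp: FF_def)
  also have "\<dots> = W2 (real (card (sel x U))) * real (card {j\<in>sel x U. missf x j})"
    by (rule sum_if_const) (auto simp: finU sel_def)
  finally show ?thesis by (simp add: W2_def of_nat_max)
qed

lemma sum_HH: "(\<Sum>j\<in>U. HH W2 j x) = (if card (sel x U) > 0 then 1 else (0::real))"
proof -
  have "(\<Sum>j\<in>U. HH W2 j x) = (\<Sum>j\<in>U. if j \<in> sel x U then W2 (real (card (sel x U))) else 0)"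
    by (rule sum.cong) (auto simp: HH_def)
  also have "\<dots> = W2 (real (card (sel x U))) * real (card (sel x U))"
    by (rule sum_if_const) (auto simp: finU sel_def)
  finally show ?thesis by (simp add: W2_def)
qed

lemma sum_LL: "(\<Sum>j\<in>U. LL W2 j x) \<le> 1 / (real (card (sel x C)) + 1)"
proof -
  have "(\<Sum>j\<in>U. LL W2 j x) = (\<Sum>j\<in>U. if j \<in> sel x U then W2 (real (card (sel x U))) / (real (card (sel x C)) + 1) else 0)"
    by (rule sum.cong) (auto simp: LL_def)
  also have "\<dots> = W2 (real (card (sel x U))) / (real (card (sel x C)) + 1) * real (card (sel x U))"
    by (rule sum_if_const) (auto simp: finU sel_def)
  also have "\<dots> = (W2 (real (card (sel x U))) * real (card (sel x U))) / (real (card (sel x C)) + 1)" by simp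
  also have "\<dots> \<le> 1 / (real (card (sel x C)) + 1)"
    by (rule divide_right_mono) (auto simp: W2_def)
  finally show ?thesis .
qed

lemma pred_FF_set: "j \<in> U \<Longrightarrow> Measurable.pred Bm (\<lambda>x. j \<in> sel x U \<and> missf x j)"
proof -
  assume j: "j \<in> U"
  then have jI: "j \<in> I" by auto
  note [measurable] = pred_sel[OF jI] pred_missf[OF jI]
  show ?thesis by measurable
qed

lemma part1:
  assumes j: "j \<in> U" and pos: "prob_space.prob M {\<omega> \<in> space M. j \<in> selected \<tau> g C U X U \<omega>} > 0"
  shows "cond_prob M (\<lambda>\<omega>. scop_miss \<alpha> \<mu> \<tau> g C U X Y j \<omega>) (\<lambda>\<omega>. j \<in> selected \<tau> g C U X U \<omega>) \<le> \<alpha>"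
proof -
  have jI: "j \<in> I" using j by auto
  have e1: "{\<omega>\<in>space M. scop_miss \<alpha> \<mu> \<tau> g C U X Y j \<omega> \<and> j \<in> selected \<tau> g C U X U \<omega>}
      = {\<omega>\<in>space M. j \<in> sel (Z \<omega>) U \<and> missf (Z \<omega>) j}"
    using miss_Z[OF jI] sel_Z[of U] by auto
  have e2: "{\<omega>\<in>space M. j \<in> selected \<tau> g C U X U \<omega>} = {\<omega>\<in>space M. j \<in> sel (Z \<omega>) U}"
    using sel_Z[of U] by auto
  have num: "measure M {\<omega>\<in>space M. scop_miss \<alpha> \<mu> \<tau> g C U X Y j \<omega> \<and> j \<in> selected \<tau> g C U X U \<omega>}
     = (\<integral>x. FF (\<lambda>_. 1::real) j x \<partial>Q)"
    unfolding e1 measure_Z[OF pred_FF_set[OF j]] by (simp add: FF_def)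
  have den: "measure M {\<omega>\<in>space M. j \<in> selected \<tau> g C U X U \<omega>} = (\<integral>x. HH (\<lambda>_. 1::real) j x \<partial>Q)"
    unfolding e2 measure_Z[OF pred_sel[OF jI]] by (simp add: HH_def)
  have le: "(\<integral>x. FF (\<lambda>_. 1::real) j x \<partial>Q) \<le> \<alpha> * (\<integral>x. HH (\<lambda>_. 1::real) j x \<partial>Q)"
    by (rule int_upper[OF j]) auto
  have dpos: "(\<integral>x. HH (\<lambda>_. 1::real) j x \<partial>Q) > 0" using pos den by simp
  show ?thesis unfolding cond_prob_def num den using le dpos by (simp add: divide_le_eq)
qed

lemma meas_sumFF: "(\<lambda>x. \<Sum>j\<in>U. FF W2 j x) \<in> borel_measurable Bm"
  by (rule borel_measurable_sum) (rule meas_FF(1)[OF _ W2(2)])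

lemma FCR_eq: "scop_FCR M \<alpha> \<mu> \<tau> g C U X Y = (\<Sum>j\<in>U. \<integral>x. FF W2 j x \<partial>Q)"
proof -
  have "scop_FCR M \<alpha> \<mu> \<tau> g C U X Y = (\<integral>\<omega>. (\<Sum>j\<in>U. FF W2 j (Z \<omega>)) \<partial>M)"
    unfolding scop_FCR_def
  proof (rule Bochner_Integration.integral_cong[OF refl])
    fix \<omega> assume "\<omega> \<in> space M"
    have "{j \<in> selected \<tau> g C U X U \<omega>. scop_miss \<alpha> \<mu> \<tau> g C U X Y j \<omega>} = {j\<in>sel (Z \<omega>) U. missf (Z \<omega>) j}"
      using sel_Z[of U \<omega>] miss_Z by (auto simp: sel_def)
    then show "real (card {j \<in> selected \<tau> g C U X U \<omega>. scop_miss \<alpha> \<mu> \<tau> g C U X Y j \<omega>}) /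
          real (max (card (selected \<tau> g C U X U \<omega>)) 1) = (\<Sum>j\<in>U. FF W2 j (Z \<omega>))"
      unfolding sum_FF using sel_Z[of U \<omega>] by simp
  qed
  also have "\<dots> = (\<integral>x. (\<Sum>j\<in>U. FF W2 j x) \<partial>Q)" by (rule int_Z[OF meas_sumFF])
  also have "\<dots> = (\<Sum>j\<in>U. \<integral>x. FF W2 j x \<partial>Q)"
    by (rule Bochner_Integration.integral_sum)
       (rule integ_bdd[OF meas_FF(1)[OF _ W2(2)] bound_FF(1)[OF W2(1)]])
  finally show ?thesis .
qed

lemma sum_int_HH: "(\<Sum>j\<in>U. \<integral>x. HH W2 j x \<partial>Q) = (\<integral>x. (if card (sel x U) > 0 then 1 else (0::real)) \<partial>Q)"
proof -
  have "(\<Sum>j\<in>U. \<integral>x. HH W2 j x \<partial>Q) = (\<integral>x. (\<Sum>j\<in>U. HH W2 j x) \<partial>Q)"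
    by (rule Bochner_Integration.integral_sum[symmetric])
       (rule integ_bdd[OF meas_FF(2)[OF _ W2(2)] bound_FF(2)[OF W2(1)]])
  then show ?thesis by (simp add: sum_HH)
qed

lemma pred_card_pos: "Measurable.pred Bm (\<lambda>x. card (sel x U) > 0)"
proof -
  have m: "(\<lambda>x. real (card (sel x U))) \<in> borel_measurable Bm" by (rule meas_card_sel) auto
  have "Measurable.pred Bm (\<lambda>x. (0::real) < real (card (sel x U)))"
    unfolding pred_def by (rule borel_measurable_less[OF borel_measurable_const m])
  then show ?thesis by simp
qed

lemma part2: "scop_FCR M \<alpha> \<mu> \<tau> g C U X Y \<le> \<alpha>"
proof -
  interpret Qp: prob_space Q by (rule Q_prob)
  have "scop_FCR M \<alpha> \<mu> \<tau> g C U X Y \<le> (\<Sum>j\<in>U. \<alpha> * \<integral>x. HH W2 j x \<partial>Q)"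
    unfolding FCR_eq by (rule sum_mono) (rule int_upper[OF _ W2(2) W2(1)])
  also have "\<dots> = \<alpha> * (\<integral>x. (if card (sel x U) > 0 then 1 else (0::real)) \<partial>Q)"
    by (simp add: sum_distrib_left[symmetric] sum_int_HH)
  also have "\<dots> \<le> \<alpha> * 1"
  proof (rule mult_left_mono)
    have "(\<integral>x. (if card (sel x U) > 0 then 1 else (0::real)) \<partial>Q) \<le> (\<integral>x. (1::real) \<partial>Q)"
    proof (rule integral_mono)
      show "integrable Q (\<lambda>x. if card (sel x U) > 0 then 1 else (0::real))"
        by (rule integ_bdd[where B=1]) (use pred_card_pos in \<open>auto intro!: measurable_If simp: pred_def\<close>)
    qed auto
    then show "(\<integral>x. (if card (sel x U) > 0 then 1 else (0::real)) \<partial>Q) \<le> 1" by (simp add: Qp.prob_space)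
  qed (use alpha in auto)
  finally show ?thesis by simp
qed

lemma part3:
  assumes ae: "AE \<omega> in M. inj_on (\<lambda>i. \<bar>Y i \<omega> - \<mu> (X i \<omega>)\<bar>) (C \<union> U)"
    and p1: "prob_space.prob M {\<omega> \<in> space M. card (selected \<tau> g C U X U \<omega>) > 0} = 1"
  shows "scop_FCR M \<alpha> \<mu> \<tau> g C U X Y \<ge> \<alpha> - (\<integral>\<omega>. 1 / (real (card (selected \<tau> g C U X C \<omega>)) + 1) \<partial>M)"
proof -
  have aeQ: "AE x in Q. inj_on (rr x) I" by (rule AE_Q_inj[OF ae])
  have mC: "(\<lambda>x. real (card (sel x C))) \<in> borel_measurable Bm" by (rule meas_card_sel) auto
  have mC': "(\<lambda>x. 1 / (real (card (sel x C)) + 1)) \<in> borel_measurable Bm"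
    using mC by measurable
  have h1: "(\<integral>x. (if card (sel x U) > 0 then 1 else (0::real)) \<partial>Q) = 1"
  proof -
    have "{\<omega> \<in> space M. card (selected \<tau> g C U X U \<omega>) > 0} = {\<omega> \<in> space M. card (sel (Z \<omega>) U) > 0}"
      using sel_Z[of U] by auto
    then show ?thesis using p1 measure_Z[OF pred_card_pos] by simp
  qed
  have intLL: "(\<Sum>j\<in>U. \<integral>x. LL W2 j x \<partial>Q) \<le> (\<integral>\<omega>. 1 / (real (card (selected \<tau> g C U X C \<omega>)) + 1) \<partial>M)"
  proof -
    have "(\<Sum>j\<in>U. \<integral>x. LL W2 j x \<partial>Q) = (\<integral>x. (\<Sum>j\<in>U. LL W2 j x) \<partial>Q)"
      by (rule Bochner_Integration.integral_sum[symmetric])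
         (rule integ_bdd[OF meas_FF(3)[OF _ W2(2)] bound_FF(3)[OF W2(1)]])
    also have "\<dots> \<le> (\<integral>x. 1 / (real (card (sel x C)) + 1) \<partial>Q)"
    proof (rule integral_mono)
      show "integrable Q (\<lambda>x. \<Sum>j\<in>U. LL W2 j x)"
        by (rule Bochner_Integration.integrable_sum)
           (rule integ_bdd[OF meas_FF(3)[OF _ W2(2)] bound_FF(3)[OF W2(1)]])
      show "integrable Q (\<lambda>x. 1 / (real (card (sel x C)) + 1))"
        by (rule integ_bdd[OF mC', where B=1]) simp
    qed (rule sum_LL)
    also have "\<dots> = (\<integral>\<omega>. 1 / (real (card (sel (Z \<omega>) C)) + 1) \<partial>M)" by (rule int_Z[OF mC', symmetric])
    also have "\<dots> = (\<integral>\<omega>. 1 / (real (card (selected \<tau> g C U X C \<omega>)) + 1) \<partial>M)"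
      using sel_Z[of C] by simp
    finally show ?thesis .
  qed
  have "scop_FCR M \<alpha> \<mu> \<tau> g C U X Y \<ge> (\<Sum>j\<in>U. \<alpha> * (\<integral>x. HH W2 j x \<partial>Q) - (\<integral>x. LL W2 j x \<partial>Q))"
    unfolding FCR_eq by (rule sum_mono) (rule int_lower[OF _ W2(2) W2(1) aeQ])
  also have "(\<Sum>j\<in>U. \<alpha> * (\<integral>x. HH W2 j x \<partial>Q) - (\<integral>x. LL W2 j x \<partial>Q))
      = \<alpha> * (\<Sum>j\<in>U. \<integral>x. HH W2 j x \<partial>Q) - (\<Sum>j\<in>U. \<integral>x. LL W2 j x \<partial>Q)"
    by (simp add: sum_subtractf sum_distrib_left)
  also have "\<dots> = \<alpha> - (\<Sum>j\<in>U. \<integral>x. LL W2 j x \<partial>Q)" using h1 by (simp add: sum_int_HH)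
  finally show ?thesis using intLL by linarith
qed
end

lemma emptyU:
  fixes M :: "'w measure"
    and X :: "'i \<Rightarrow> 'w \<Rightarrow> real ^ 'd"
    and Y :: "'i \<Rightarrow> 'w \<Rightarrow> real"
    and \<mu> g :: "real ^ 'd \<Rightarrow> real"
    and \<tau> :: "('i \<Rightarrow> real) \<Rightarrow> real"
    and C U :: "'i set"
    and \<alpha> :: real
  assumes prob: "prob_space M"
    and finC: "finite C" and finU: "finite U" and disj: "C \<inter> U = {}"
    and alpha: "0 < \<alpha>" "\<alpha> < 1"
    and mu_meas: "\<mu> \<in> borel_measurable borel"
    and g_meas: "g \<in> borel_measurable borel"
    and X_meas: "\<And>i. i \<in> C \<union> U \<Longrightarrow> X i \<in> borel_measurable M"
    and Y_meas: "\<And>i. i \<in> C \<union> U \<Longrightarrow> Y i \<in> borel_measurable M"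
    and indep: "prob_space.indep_vars M (\<lambda>_. borel) (\<lambda>i \<omega>. (X i \<omega>, Y i \<omega>)) (C \<union> U)"
    and ident: "\<And>i k. i \<in> C \<union> U \<Longrightarrow> k \<in> C \<union> U \<Longrightarrow>
        distr M borel (\<lambda>\<omega>. (X i \<omega>, Y i \<omega>)) = distr M borel (\<lambda>\<omega>. (X k \<omega>, Y k \<omega>))"
    and tau_meas: "\<tau> \<in> borel_measurable (PiM (C \<union> U) (\<lambda>_. borel))"
    and Uemp: "U = {}" and tau_sym: "\<And>\<pi> f. \<pi> permutes (C \<union> U) \<Longrightarrow> f \<in> extensional (C \<union> U) \<Longrightarrow> \<tau> (f \<circ> \<pi>) = \<tau> f"
  shows "(\<forall>j \<in> U. prob_space.prob M {\<omega> \<in> space M. j \<in> selected \<tau> g C U X U \<omega>} > 0 \<longrightarrow>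
            cond_prob M (\<lambda>\<omega>. scop_miss \<alpha> \<mu> \<tau> g C U X Y j \<omega>)
                        (\<lambda>\<omega>. j \<in> selected \<tau> g C U X U \<omega>) \<le> \<alpha>)
       \<and> scop_FCR M \<alpha> \<mu> \<tau> g C U X Y \<le> \<alpha>
       \<and> (((AE \<omega> in M. inj_on (\<lambda>i. \<bar>Y i \<omega> - \<mu> (X i \<omega>)\<bar>) (C \<union> U))
            \<and> prob_space.prob M {\<omega> \<in> space M. card (selected \<tau> g C U X U \<omega>) > 0} = 1)
          \<longrightarrow> scop_FCR M \<alpha> \<mu> \<tau> g C U X Y
                \<ge> \<alpha> - (\<integral>\<omega>. 1 / (real (card (selected \<tau> g C U X C \<omega>)) + 1) \<partial>M))"
  proof -
  have sU: "\<And>\<omega>. selected \<tau> g C U X U \<omega> = {}" using Uemp by (simp add: selected_def)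
  have fcr: "scop_FCR M \<alpha> \<mu> \<tau> g C U X Y = 0" unfolding scop_FCR_def sU by simp
  have a: "\<forall>j \<in> U. P j" for P using Uemp by simp
  have b: "prob_space.prob M {\<omega> \<in> space M. card (selected \<tau> g C U X U \<omega>) > 0} \<noteq> 1"
    unfolding sU by simp
  show ?thesis
  proof (intro conjI impI)
    show "\<forall>j \<in> U. prob_space.prob M {\<omega> \<in> space M. j \<in> selected \<tau> g C U X U \<omega>} > 0 \<longrightarrow>
            cond_prob M (\<lambda>\<omega>. scop_miss \<alpha> \<mu> \<tau> g C U X Y j \<omega>)
                        (\<lambda>\<omega>. j \<in> selected \<tau> g C U X U \<omega>) \<le> \<alpha>" by (rule a)
    show "scop_FCR M \<alpha> \<mu> \<tau> g C U X Y \<le> \<alpha>" using fcr alpha by simp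
    assume h: "(AE \<omega> in M. inj_on (\<lambda>i. \<bar>Y i \<omega> - \<mu> (X i \<omega>)\<bar>) (C \<union> U))
            \<and> prob_space.prob M {\<omega> \<in> space M. card (selected \<tau> g C U X U \<omega>) > 0} = 1"
    then show "scop_FCR M \<alpha> \<mu> \<tau> g C U X Y \<ge> \<alpha> - (\<integral>\<omega>. 1 / (real (card (selected \<tau> g C U X C \<omega>)) + 1) \<partial>M)"
      using b by (elim conjE) simp
  qed
qed

theorem theorem1:
  fixes M :: "'w measure"
    and X :: "'i \<Rightarrow> 'w \<Rightarrow> real ^ 'd"
    and Y :: "'i \<Rightarrow> 'w \<Rightarrow> real"
    and \<mu> g :: "real ^ 'd \<Rightarrow> real"
    and \<tau> :: "('i \<Rightarrow> real) \<Rightarrow> real"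
    and C U :: "'i set"
    and \<alpha> :: real
  assumes prob: "prob_space M"
    and finC: "finite C" and finU: "finite U" and disj: "C \<inter> U = {}"
    and alpha: "0 < \<alpha>" "\<alpha> < 1"
    and mu_meas: "\<mu> \<in> borel_measurable borel"
    and g_meas: "g \<in> borel_measurable borel"
    and X_meas: "\<And>i. i \<in> C \<union> U \<Longrightarrow> X i \<in> borel_measurable M"
    and Y_meas: "\<And>i. i \<in> C \<union> U \<Longrightarrow> Y i \<in> borel_measurable M"
    and indep: "prob_space.indep_vars M (\<lambda>_. borel) (\<lambda>i \<omega>. (X i \<omega>, Y i \<omega>)) (C \<union> U)"
    and ident: "\<And>i k. i \<in> C \<union> U \<Longrightarrow> k \<in> C \<union> U \<Longrightarrow>
        distr M borel (\<lambda>\<omega>. (X i \<omega>, Y i \<omega>)) = distr M borel (\<lambda>\<omega>. (X k \<omega>, Y k \<omega>))"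
    and tau_meas: "\<tau> \<in> borel_measurable (PiM (C \<union> U) (\<lambda>_. borel))"
    and tau_sym: "\<And>\<pi> f. \<pi> permutes (C \<union> U) \<Longrightarrow> f \<in> extensional (C \<union> U) \<Longrightarrow> \<tau> (f \<circ> \<pi>) = \<tau> f"
  shows "(\<forall>j \<in> U. prob_space.prob M {\<omega> \<in> space M. j \<in> selected \<tau> g C U X U \<omega>} > 0 \<longrightarrow>
            cond_prob M (\<lambda>\<omega>. scop_miss \<alpha> \<mu> \<tau> g C U X Y j \<omega>)
                        (\<lambda>\<omega>. j \<in> selected \<tau> g C U X U \<omega>) \<le> \<alpha>)
       \<and> scop_FCR M \<alpha> \<mu> \<tau> g C U X Y \<le> \<alpha>
       \<and> (((AE \<omega> in M. inj_on (\<lambda>i. \<bar>Y i \<omega> - \<mu> (X i \<omega>)\<bar>) (C \<union> U))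
            \<and> prob_space.prob M {\<omega> \<in> space M. card (selected \<tau> g C U X U \<omega>) > 0} = 1)
          \<longrightarrow> scop_FCR M \<alpha> \<mu> \<tau> g C U X Y
                \<ge> \<alpha> - (\<integral>\<omega>. 1 / (real (card (selected \<tau> g C U X C \<omega>)) + 1) \<partial>M))"
  proof (cases "U = {}")
  case True
  show ?thesis
    by (rule emptyU[OF prob finC finU disj alpha mu_meas g_meas X_meas Y_meas indep ident tau_meas True tau_sym])
next
  case False
  interpret scop M X Y \<mu> g \<tau> C U \<alpha>
    by (rule scop.intro[OF prob finC finU disj alpha(1) alpha(2) mu_meas g_meas X_meas Y_meas indep ident tau_meas tau_sym False])
  show ?thesis
  proof (intro conjI impI ballI)
    fix j assume "j \<in> U" "prob_space.prob M {\<omega> \<in> space M. j \<in> selected \<tau> g C U X U \<omega>} > 0"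
    then show "cond_prob M (\<lambda>\<omega>. scop_miss \<alpha> \<mu> \<tau> g C U X Y j \<omega>)
                        (\<lambda>\<omega>. j \<in> selected \<tau> g C U X U \<omega>) \<le> \<alpha>" by (rule part1)
  next
    show "scop_FCR M \<alpha> \<mu> \<tau> g C U X Y \<le> \<alpha>" by (rule part2)
  next
    assume h: "(AE \<omega> in M. inj_on (\<lambda>i. \<bar>Y i \<omega> - \<mu> (X i \<omega>)\<bar>) (C \<union> U))
            \<and> prob_space.prob M {\<omega> \<in> space M. card (selected \<tau> g C U X U \<omega>) > 0} = 1"
    then show "scop_FCR M \<alpha> \<mu> \<tau> g C U X Y \<ge> \<alpha> - (\<integral>\<omega>. 1 / (real (card (selected \<tau> g C U X C \<omega>)) + 1) \<partial>M)"
      by (elim conjE) (rule part3)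
  qed
qed

end
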